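(* Let $\mathcal{X}$ and $\mathcal{Z}$ be subsets of a common normed space (norm $\|\cdot\|$), let $\mathbf{x}\in\mathcal{X}$, and let $q(\cdot\mid\cdot)$ be an $\varepsilon$-LDP mechanism from $\mathcal{X}$ to $\mathcal{Z}$. Let $p$ be a reference distribution on $\mathcal{Z}$ such that $|\ln(q(\mathbf{z}\mid\mathbf{x})/p(\mathbf{z}))|\le\varepsilon$ for all $\mathbf{x}\in\mathcal{X}$, $\mathbf{z}\in\mathcal{Z}$. Let $c\ge 0$ be a constant and let the number of candidates be $N=2^{(\log e+4c)\varepsilon}$. Then, with probability at least $1-2\alpha$ over the draw of the candidates $\mathbf{z}_1,\dots,\mathbf{z}_N$, \[ \Big|\mathbb{E}_{q^{\mathrm{mrc}}}\big[\|\mathbf{z}-\mathbf{x}\|^2\big]-\mathbb{E}_{q}\big[\|\mathbf{z}-\mathbf{x}\|^2\big]\Big|\le\frac{2\alpha\sqrt{\mathbb{E}_{q}[\|\mathbf{z}-\mathbf{x}\|^4]}}{1-\alpha}, \qquad \alpha=\sqrt{2^{-c\varepsilon}+2^{-c^2/\log e+1}}, \] where $\mathbb{E}_q$ is over $\mathbf{z}\sim q(\cdot\mid\mathbf{x})$ and $\mathbb{E}_{q^{\mathrm{mrc}}}$ is over $\mathbf{z}\sim q^{\mathrm{mrc}}(\cdot\mid\mathbf{x})$ for the given candidates.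
   Context: $\log$ denotes the base-2 logarithm and $\ln$ the natural logarithm. A mechanism $q$ maps $\mathbf{x}\in\mathcal{X}$ to a random $\mathbf{z}\in\mathcal{Z}$ with conditional density (or probability mass function) $q(\mathbf{z}\mid\mathbf{x})$; it is $\varepsilon$-LDP if $q(\mathbf{z}\mid\mathbf{x})\le e^{\varepsilon}q(\mathbf{z}\mid\mathbf{x}')$ for all $\mathbf{x},\mathbf{x}'\in\mathcal{X}$, $\mathbf{z}\in\mathcal{Z}$. Minimal Random Coding (MRC): given $q$, a reference distribution $p$ on $\mathcal{Z}$ (density w.r.t. the same base measure) and an integer $N\ge1$, draw candidates $\mathbf{z}_1,\dots,\mathbf{z}_N$ i.i.d. from $p$ (shared randomness, independent of $\mathbf{x}$), set weights $w(k)=q(\mathbf{z}_k\mid\mathbf{x})/p(\mathbf{z}_k)$ and $\pi^{\mathrm{mrc}}_{\mathbf{x}}(k)=w(k)/\sum_{k'=1}^N w(k')$ for $k\in[N]$. The user sends $K\sim\pi^{\mathrm{mrc}}_{\mathbf{x}}$, and $q^{\mathrm{mrc}}(\cdot\mid\mathbf{x})=\sum_{k}\pi^{\mathrm{mrc}}_{\mathbf{x}}(k)\,\delta_{\mathbf{z}_k}$ is the distribution of $\mathbf{z}_K$. *)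

theory Defs
  imports "HOL-Probability.Probability"
begin

text \<open>Conventions: a mechanism is a function q with q x z = q(z | x), a density in z
  w.r.t. a base measure M whose space is the output set Z.\<close>

definition eps_LDP :: "real \<Rightarrow> 'x set \<Rightarrow> 'z set \<Rightarrow> ('x \<Rightarrow> 'z \<Rightarrow> real) \<Rightarrow> bool" where
  "eps_LDP \<epsilon> X Z q \<longleftrightarrow>
     (\<forall>x\<in>X. \<forall>x'\<in>X. \<forall>z\<in>Z. q x z \<le> exp \<epsilon> * q x' z)"

definition mrc_weight :: "('x \<Rightarrow> 'z \<Rightarrow> real) \<Rightarrow> ('z \<Rightarrow> real) \<Rightarrow> 'x \<Rightarrow> (nat \<Rightarrow> 'z) \<Rightarrow> nat \<Rightarrow> real" where
  "mrc_weight q p x zs k = q x (zs k) / p (zs k)"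

text \<open>MRC selection distribution pi_x^mrc(k), k in [N] (indexed 0..N-1).\<close>
definition mrc_pi :: "nat \<Rightarrow> ('x \<Rightarrow> 'z \<Rightarrow> real) \<Rightarrow> ('z \<Rightarrow> real) \<Rightarrow> 'x \<Rightarrow> (nat \<Rightarrow> 'z) \<Rightarrow> nat \<Rightarrow> real" where
  "mrc_pi N q p x zs k = mrc_weight q p x zs k / (\<Sum>k'<N. mrc_weight q p x zs k')"

definition mrc_expect :: "nat \<Rightarrow> ('x \<Rightarrow> 'z \<Rightarrow> real) \<Rightarrow> ('z \<Rightarrow> real) \<Rightarrow> 'x \<Rightarrow> (nat \<Rightarrow> 'z) \<Rightarrow> ('z \<Rightarrow> real) \<Rightarrow> real" where
  "mrc_expect N q p x zs f = (\<Sum>k<N. mrc_pi N q p x zs k * f (zs k))"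

definition mech_expect :: "'z measure \<Rightarrow> ('x \<Rightarrow> 'z \<Rightarrow> real) \<Rightarrow> 'x \<Rightarrow> ('z \<Rightarrow> real) \<Rightarrow> real" where
  "mech_expect M q x f = (\<integral>z. f z * q x z \<partial>M)"

definition candidates :: "nat \<Rightarrow> 'z measure \<Rightarrow> ('z \<Rightarrow> real) \<Rightarrow> (nat \<Rightarrow> 'z) measure" where
  "candidates N M p = PiM {..<N} (\<lambda>_. density M (\<lambda>z. ennreal (p z)))"

end

theory Submission
  imports Defs
begin


lemma sum_sq_PiM:
  fixes P :: "'a measure" and Y :: "'a \<Rightarrow> real"
  assumes P: "prob_space P" and Ym[measurable]: "Y \<in> borel_measurable P"
    and Y2: "integrable P (\<lambda>z. (Y z)\<^sup>2)" and Y0: "integral\<^sup>L P Y = 0"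
  shows "integrable (PiM {..<N} (\<lambda>_. P)) (\<lambda>zs. (\<Sum>k<N. Y (zs k))\<^sup>2)
     \<and> (\<integral>zs. (\<Sum>k<N. Y (zs k))\<^sup>2 \<partial>PiM {..<N} (\<lambda>_. P)) = real N * (\<integral>z. (Y z)\<^sup>2 \<partial>P)"
proof -
  interpret P: prob_space P by fact
  interpret PP: product_prob_space "\<lambda>_. P" "{..<N}"
    by (intro product_prob_spaceI) (simp add: P)
  have Yi: "integrable P Y"
    using P.square_integrable_imp_integrable[OF Ym Y2] .
  define F where "F k l zs = Y (zs k) * Y (zs l)" for k l and zs :: "nat \<Rightarrow> 'a"
  have key: "integrable (PiM {..<N} (\<lambda>_. P)) (F k l) \<and>
     integral\<^sup>L (PiM {..<N} (\<lambda>_. P)) (F k l) = (if k = l then (\<integral>z. (Y z)\<^sup>2 \<partial>P) else 0)"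
    if k: "k < N" and l: "l < N" for k l
  proof (cases "k = l")
    case True
    define f where "f i = (if i = k then (\<lambda>z. (Y z)\<^sup>2) else (\<lambda>_. 1::real))" for i
    have fi: "integrable P (f i)" for i using Y2 by (auto simp: f_def)
    have eq: "F k l zs = (\<Prod>i\<in>{..<N}. f i (zs i))" for zs
    proof -
      have "(\<Prod>i\<in>{..<N}. f i (zs i)) = (\<Prod>i\<in>{..<N}. if i \<in> {k} then (Y (zs i))\<^sup>2 else 1)"
        by (intro prod.cong) (auto simp: f_def)
      also have "\<dots> = (\<Prod>i\<in>{..<N} \<inter> {k}. (Y (zs i))\<^sup>2)"
        by (rule prod.inter_restrict[symmetric]) simp
      also have "{..<N} \<inter> {k} = {k}" using k by auto
      finally show ?thesis using True by (simp add: F_def power2_eq_square)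
    qed
    have "integrable (PiM {..<N} (\<lambda>_. P)) (\<lambda>zs. \<Prod>i\<in>{..<N}. f i (zs i))"
      by (rule PP.product_integrable_prod) (auto simp: fi)
    moreover have "(\<integral>zs. (\<Prod>i\<in>{..<N}. f i (zs i)) \<partial>PiM {..<N} (\<lambda>_. P)) = (\<Prod>i\<in>{..<N}. integral\<^sup>L P (f i))"
      by (rule PP.product_integral_prod) (auto simp: fi)
    moreover have "(\<Prod>i\<in>{..<N}. integral\<^sup>L P (f i)) = (\<Prod>i\<in>{..<N}. if i \<in> {k} then (\<integral>z. (Y z)\<^sup>2 \<partial>P) else 1)"
      by (intro prod.cong) (auto simp: f_def P.prob_space)
    moreover have "\<dots> = (\<integral>z. (Y z)\<^sup>2 \<partial>P)"
      using k by (subst prod.inter_restrict[symmetric]) auto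
    moreover have eqf: "F k l = (\<lambda>zs. \<Prod>i\<in>{..<N}. f i (zs i))" using eq by auto
    ultimately show ?thesis unfolding eqf using True by simp
  next
    case False
    define f where "f i = (if i = k \<or> i = l then Y else (\<lambda>_. 1::real))" for i
    have fi: "integrable P (f i)" for i using Yi by (auto simp: f_def)
    have eq: "F k l zs = (\<Prod>i\<in>{..<N}. f i (zs i))" for zs
    proof -
      have "(\<Prod>i\<in>{..<N}. f i (zs i)) = (\<Prod>i\<in>{..<N}. if i \<in> {k,l} then Y (zs i) else 1)"
        by (intro prod.cong) (auto simp: f_def)
      also have "\<dots> = (\<Prod>i\<in>{..<N} \<inter> {k,l}. Y (zs i))"
        by (rule prod.inter_restrict[symmetric]) simp
      also have "{..<N} \<inter> {k,l} = {k,l}" using k l by auto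
      finally show ?thesis using False by (simp add: F_def)
    qed
    have "integrable (PiM {..<N} (\<lambda>_. P)) (\<lambda>zs. \<Prod>i\<in>{..<N}. f i (zs i))"
      by (rule PP.product_integrable_prod) (auto simp: fi)
    moreover have "(\<integral>zs. (\<Prod>i\<in>{..<N}. f i (zs i)) \<partial>PiM {..<N} (\<lambda>_. P)) = (\<Prod>i\<in>{..<N}. integral\<^sup>L P (f i))"
      by (rule PP.product_integral_prod) (auto simp: fi)
    moreover have "(\<Prod>i\<in>{..<N}. integral\<^sup>L P (f i)) = 0"
      using k Y0 by (intro prod_zero bexI[of _ k]) (auto simp: f_def)
    moreover have eqf: "F k l = (\<lambda>zs. \<Prod>i\<in>{..<N}. f i (zs i))" using eq by auto
    ultimately show ?thesis unfolding eqf using False by simp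
  qed
  have sq: "(\<Sum>k<N. Y (zs k))\<^sup>2 = (\<Sum>k<N. \<Sum>l<N. F k l zs)" for zs
    by (simp add: power2_eq_square sum_product F_def)
  have int: "integrable (PiM {..<N} (\<lambda>_. P)) (\<lambda>zs. \<Sum>k<N. \<Sum>l<N. F k l zs)"
  proof (rule Bochner_Integration.integrable_sum)
    fix k assume k: "k \<in> {..<N}"
    show "integrable (PiM {..<N} (\<lambda>_. P)) (\<lambda>zs. \<Sum>l<N. F k l zs)"
      by (rule Bochner_Integration.integrable_sum) (use key k in auto)
  qed
  have "(\<integral>zs. (\<Sum>k<N. \<Sum>l<N. F k l zs) \<partial>PiM {..<N} (\<lambda>_. P))
      = (\<Sum>k<N. \<Sum>l<N. integral\<^sup>L (PiM {..<N} (\<lambda>_. P)) (F k l))"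
  proof -
    have "(\<integral>zs. (\<Sum>k<N. \<Sum>l<N. F k l zs) \<partial>PiM {..<N} (\<lambda>_. P))
      = (\<Sum>k<N. (\<integral>zs. (\<Sum>l<N. F k l zs) \<partial>PiM {..<N} (\<lambda>_. P)))"
      by (rule Bochner_Integration.integral_sum, rule Bochner_Integration.integrable_sum) (use key in auto)
    also have "\<dots> = (\<Sum>k<N. \<Sum>l<N. integral\<^sup>L (PiM {..<N} (\<lambda>_. P)) (F k l))"
      by (intro sum.cong refl Bochner_Integration.integral_sum) (use key in auto)
    finally show ?thesis .
  qed
  also have "\<dots> = (\<Sum>k<N. \<Sum>l<N. if k = l then (\<integral>z. (Y z)\<^sup>2 \<partial>P) else 0)"
    by (intro sum.cong refl) (use key in auto)
  also have "\<dots> = real N * (\<integral>z. (Y z)\<^sup>2 \<partial>P)"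
    by (simp add: sum.delta)
  finally show ?thesis using int by (simp add: sq)
qed



lemma dens_facts:
  fixes M :: "'a measure" and qx p f :: "'a \<Rightarrow> real" and \<epsilon> :: real
  assumes qm[measurable]: "qx \<in> borel_measurable M" and pm[measurable]: "p \<in> borel_measurable M"
    and fm[measurable]: "f \<in> borel_measurable M"
    and qpos: "\<And>z. z \<in> space M \<Longrightarrow> qx z > 0"
    and ppos: "\<And>z. z \<in> space M \<Longrightarrow> p z > 0"
    and rho: "\<And>z. z \<in> space M \<Longrightarrow> qx z / p z \<le> exp \<epsilon>"
    and qd: "(\<integral>\<^sup>+ z. ennreal (qx z) \<partial>M) = 1"
    and pd: "(\<integral>\<^sup>+ z. ennreal (p z) \<partial>M) = 1"
    and f2: "integrable M (\<lambda>z. (f z)\<^sup>2 * qx z)"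
  defines "I \<equiv> (\<integral>z. f z * qx z \<partial>M)"
  defines "Y \<equiv> (\<lambda>z. f z * (qx z / p z) - I)"
  shows "prob_space (density M (\<lambda>z. ennreal (p z)))"
    and "Y \<in> borel_measurable (density M (\<lambda>z. ennreal (p z)))"
    and "integrable (density M (\<lambda>z. ennreal (p z))) (\<lambda>z. (Y z)\<^sup>2)"
    and "integral\<^sup>L (density M (\<lambda>z. ennreal (p z))) Y = 0"
    and "(\<integral>z. (Y z)\<^sup>2 \<partial>density M (\<lambda>z. ennreal (p z))) \<le> exp \<epsilon> * (\<integral>z. (f z)\<^sup>2 * qx z \<partial>M)"
    and "I\<^sup>2 \<le> (\<integral>z. (f z)\<^sup>2 * qx z \<partial>M)"
proof -
  let ?P = "density M (\<lambda>z. ennreal (p z))"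
  have pnn: "AE z in M. 0 \<le> p z" using ppos by (auto intro!: AE_I2 less_imp_le)
  show "prob_space ?P"
    by (rule prob_spaceI) (simp add: emeasure_density pd)
  have qi: "integrable M qx"
    by (rule integrableI_nn_integral_finite[OF qm _ qd[unfolded ennreal_1[symmetric]]])
       (use qpos in \<open>auto intro!: AE_I2 less_imp_le\<close>)
  have qint: "integral\<^sup>L M qx = 1"
    by (subst integral_eq_nn_integral) (use qpos qd in \<open>auto intro!: AE_I2 less_imp_le\<close>)
  have pi: "integrable M p"
    by (rule integrableI_nn_integral_finite[OF pm _ pd[unfolded ennreal_1[symmetric]]])
       (use ppos in \<open>auto intro!: AE_I2 less_imp_le\<close>)
  have pint: "integral\<^sup>L M p = 1"
    by (subst integral_eq_nn_integral) (use ppos pd in \<open>auto intro!: AE_I2 less_imp_le\<close>)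
  have fqi: "integrable M (\<lambda>z. f z * qx z)"
  proof (rule Bochner_Integration.integrable_bound[OF Bochner_Integration.integrable_add[OF qi f2]])
    show "AE z in M. norm (f z * qx z) \<le> norm (qx z + (f z)\<^sup>2 * qx z)"
    proof (rule AE_I2)
      fix z assume z: "z \<in> space M"
      have q0: "qx z > 0" using qpos z .
      have sq0: "0 \<le> (\<bar>f z\<bar> - 1)\<^sup>2" by simp
      have "\<bar>f z\<bar> * \<bar>f z\<bar> = f z * f z" by (rule abs_mult_self_eq)
      then have "\<bar>f z\<bar> \<le> 1 + (f z)\<^sup>2" using sq0 by (simp add: power2_eq_square algebra_simps)
      then have "\<bar>f z\<bar> * qx z \<le> (1 + (f z)\<^sup>2) * qx z" using q0 by (intro mult_right_mono) auto
      then show "norm (f z * qx z) \<le> norm (qx z + (f z)\<^sup>2 * qx z)"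
        using q0 by (simp add: abs_mult algebra_simps)
    qed
  qed simp
  have g3m: "(\<lambda>z. (f z)\<^sup>2 * qx z * (qx z / p z)) \<in> borel_measurable M" by simp
  have g3i: "integrable M (\<lambda>z. (f z)\<^sup>2 * qx z * (qx z / p z))"
  proof (rule Bochner_Integration.integrable_bound[OF integrable_mult_right[OF f2, of "exp \<epsilon>"] g3m])
    show "AE z in M. norm ((f z)\<^sup>2 * qx z * (qx z / p z)) \<le> norm (exp \<epsilon> * ((f z)\<^sup>2 * qx z))"
    proof (rule AE_I2)
      fix z assume z: "z \<in> space M"
      have "(f z)\<^sup>2 * qx z * (qx z / p z) \<le> (f z)\<^sup>2 * qx z * exp \<epsilon>"
        using rho[OF z] qpos[OF z] by (intro mult_left_mono) auto
      then show "norm ((f z)\<^sup>2 * qx z * (qx z / p z)) \<le> norm (exp \<epsilon> * ((f z)\<^sup>2 * qx z))"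
        using qpos[OF z] ppos[OF z] by (simp add: abs_mult mult_ac)
    qed
  qed
  have g3le: "(\<integral>z. (f z)\<^sup>2 * qx z * (qx z / p z) \<partial>M) \<le> exp \<epsilon> * (\<integral>z. (f z)\<^sup>2 * qx z \<partial>M)"
  proof -
    have "(\<integral>z. (f z)\<^sup>2 * qx z * (qx z / p z) \<partial>M) \<le> (\<integral>z. exp \<epsilon> * ((f z)\<^sup>2 * qx z) \<partial>M)"
    proof (rule Bochner_Integration.integral_mono[OF g3i integrable_mult_right[OF f2]])
      fix z assume z: "z \<in> space M"
      have "(f z)\<^sup>2 * qx z * (qx z / p z) \<le> (f z)\<^sup>2 * qx z * exp \<epsilon>"
        using rho[OF z] qpos[OF z] by (intro mult_left_mono) auto
      then show "(f z)\<^sup>2 * qx z * (qx z / p z) \<le> exp \<epsilon> * ((f z)\<^sup>2 * qx z)" by (simp add: mult_ac)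
    qed
    then show ?thesis by simp
  qed
  have Ym: "Y \<in> borel_measurable M" unfolding Y_def by simp
  then show "Y \<in> borel_measurable ?P" by simp
  have eqY: "p z * Y z = f z * qx z - I * p z" if "z \<in> space M" for z
    using ppos[OF that] by (simp add: Y_def field_simps)
  have eqY2: "p z * (Y z)\<^sup>2 = (f z)\<^sup>2 * qx z * (qx z / p z) - 2 * I * (f z * qx z) + I\<^sup>2 * p z"
    if "z \<in> space M" for z
    using ppos[OF that] by (simp add: Y_def field_simps power2_eq_square)
  have i2: "integrable M (\<lambda>z. (f z)\<^sup>2 * qx z * (qx z / p z) - 2 * I * (f z * qx z) + I\<^sup>2 * p z)"
    using g3i fqi pi by simp
  have "integrable M (\<lambda>z. p z * (Y z)\<^sup>2)"
    by (rule Bochner_Integration.integrable_cong[THEN iffD2, OF refl _ i2]) (simp add: eqY2)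
  then show "integrable ?P (\<lambda>z. (Y z)\<^sup>2)"
    by (subst integrable_density) (use pnn Ym in auto)
  have "integral\<^sup>L ?P Y = (\<integral>z. p z * Y z \<partial>M)"
    by (subst integral_density) (use pnn Ym in auto)
  also have "\<dots> = (\<integral>z. f z * qx z - I * p z \<partial>M)"
    by (rule Bochner_Integration.integral_cong) (simp_all add: eqY)
  also have "\<dots> = I - I * 1" using fqi pi by (simp add: I_def pint)
  finally show "integral\<^sup>L ?P Y = 0" by simp
  have "(\<integral>z. (Y z)\<^sup>2 \<partial>?P) = (\<integral>z. p z * (Y z)\<^sup>2 \<partial>M)"
    by (subst integral_density) (use pnn Ym in auto)
  also have "\<dots> = (\<integral>z. (f z)\<^sup>2 * qx z * (qx z / p z) - 2 * I * (f z * qx z) + I\<^sup>2 * p z \<partial>M)"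
    by (rule Bochner_Integration.integral_cong) (simp_all add: eqY2)
  also have "\<dots> = (\<integral>z. (f z)\<^sup>2 * qx z * (qx z / p z) \<partial>M) - 2 * I * I + I\<^sup>2 * 1"
    using g3i fqi pi by (simp add: I_def pint)
  also have "\<dots> \<le> exp \<epsilon> * (\<integral>z. (f z)\<^sup>2 * qx z \<partial>M)"
    using g3le by (simp add: power2_eq_square) (smt (verit) zero_le_square)
  finally show "(\<integral>z. (Y z)\<^sup>2 \<partial>?P) \<le> exp \<epsilon> * (\<integral>z. (f z)\<^sup>2 * qx z \<partial>M)" .
  have "0 \<le> (\<integral>z. (f z - I)\<^sup>2 * qx z \<partial>M)"
    using qpos by (intro integral_nonneg_AE AE_I2) (simp add: less_imp_le)
  also have "(\<integral>z. (f z - I)\<^sup>2 * qx z \<partial>M) = (\<integral>z. (f z)\<^sup>2 * qx z - 2 * I * (f z * qx z) + I\<^sup>2 * qx z \<partial>M)"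
    by (rule Bochner_Integration.integral_cong) (simp_all add: power2_eq_square algebra_simps)
  also have "\<dots> = (\<integral>z. (f z)\<^sup>2 * qx z \<partial>M) - 2 * I * I + I\<^sup>2 * 1"
    using f2 fqi qi by (simp add: I_def qint)
  finally show "I\<^sup>2 \<le> (\<integral>z. (f z)\<^sup>2 * qx z \<partial>M)" by (simp add: power2_eq_square)
qed

lemma bad_bound:
  fixes P :: "'a measure" and Y :: "'a \<Rightarrow> real"
  assumes P: "prob_space P" and Ym[measurable]: "Y \<in> borel_measurable P"
    and Y2: "integrable P (\<lambda>z. (Y z)\<^sup>2)" and Y0: "integral\<^sup>L P Y = 0"
    and s: "s \<ge> 0" and VY: "(\<integral>z. (Y z)\<^sup>2 \<partial>P) \<le> s\<^sup>2 * K"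
    and K: "K \<le> real N * a ^ 3" and a: "a > 0" and N: "N > 0"
  shows "measure (PiM {..<N} (\<lambda>_. P)) {zs \<in> space (PiM {..<N} (\<lambda>_. P)). (\<Sum>k<N. Y (zs k))\<^sup>2 > (real N * s * a)\<^sup>2} \<le> a"
proof -
  let ?Q = "PiM {..<N} (\<lambda>_. P)"
  define T where "T zs = (\<Sum>k<N. Y (zs k))\<^sup>2" for zs
  have ST: "integrable ?Q T" "integral\<^sup>L ?Q T = real N * (\<integral>z. (Y z)\<^sup>2 \<partial>P)"
    using sum_sq_PiM[OF P Ym Y2 Y0, of N] by (simp_all add: T_def[abs_def])
  interpret Q: prob_space ?Q by (rule prob_space_PiM) (simp add: P)
  have Tm[measurable]: "T \<in> borel_measurable ?Q" using ST(1) by auto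
  have Tnn: "AE zs in ?Q. 0 \<le> T zs" by (simp add: T_def)
  have EY2: "0 \<le> (\<integral>z. (Y z)\<^sup>2 \<partial>P)" by simp
  show ?thesis
  proof (cases "s = 0")
    case True
    then have "integral\<^sup>L ?Q T = 0" using ST(2) VY EY2 by simp
    then have "AE zs in ?Q. T zs = 0"
      using integral_nonneg_eq_0_iff_AE[OF ST(1) Tnn] by simp
    then have "emeasure ?Q {zs \<in> space ?Q. \<not> T zs = 0} = 0"
      by (subst AE_iff_measurable[symmetric]) auto
    then have "measure ?Q {zs \<in> space ?Q. T zs \<noteq> 0} = 0"
      by (simp add: Q.emeasure_eq_measure)
    moreover have "{zs \<in> space ?Q. (\<Sum>k<N. Y (zs k))\<^sup>2 > (real N * s * a)\<^sup>2} = {zs \<in> space ?Q. T zs \<noteq> 0}"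
      using True by (auto simp: T_def)
    ultimately show ?thesis using a by simp
  next
    case False
    then have s0: "s > 0" using s by simp
    define c where "c = (real N * s * a)\<^sup>2"
    have c0: "c > 0" using s0 a N by (simp add: c_def)
    have "measure ?Q {zs \<in> space ?Q. T zs > c} \<le> measure ?Q {zs \<in> space ?Q. T zs \<ge> c}"
      by (intro Q.finite_measure_mono) auto
    also have "\<dots> \<le> integral\<^sup>L ?Q T / c"
      by (rule integral_Markov_inequality_measure[OF ST(1) sets.top Tnn c0])
    also have "\<dots> \<le> real N * (s\<^sup>2 * (real N * a ^ 3)) / c"
    proof -
      have "real N * (\<integral>z. (Y z)\<^sup>2 \<partial>P) \<le> real N * (s\<^sup>2 * (real N * a ^ 3))"
        using VY K by (intro mult_left_mono order_trans[OF VY] mult_left_mono[OF K]) auto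
      then show ?thesis using c0 ST(2) by (simp add: divide_right_mono)
    qed
    also have "\<dots> = a" using s0 a N by (simp add: c_def power2_eq_square power3_eq_cube field_simps)
    finally show ?thesis by (simp add: T_def c_def)
  qed
qed



lemma final_ineq:
  fixes N \<alpha> s I S1 Sf :: real
  assumes N: "N > 0" and a: "0 \<le> \<alpha>" "\<alpha> < 1" and s: "s \<ge> 0" and I: "\<bar>I\<bar> \<le> s"
    and h1: "\<bar>S1 - N\<bar> \<le> N * \<alpha>" and h2: "\<bar>Sf - N * I\<bar> \<le> N * s * \<alpha>"
  shows "\<bar>Sf / S1 - I\<bar> \<le> 2 * \<alpha> * s / (1 - \<alpha>)"
proof -
  have S1: "S1 \<ge> N * (1 - \<alpha>)" using h1 by (simp add: algebra_simps abs_le_iff)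
  have S1p: "S1 > 0" using S1 N a by (smt (verit) mult_pos_pos)
  have eq1: "\<bar>Sf / S1 - I\<bar> = \<bar>Sf - I * S1\<bar> / S1" using S1p by (simp add: field_simps)
  have t1: "\<bar>Sf - I * S1\<bar> \<le> \<bar>Sf - N * I\<bar> + \<bar>I\<bar> * \<bar>N - S1\<bar>"
  proof -
    have "Sf - I * S1 = (Sf - N * I) + I * (N - S1)" by (simp add: algebra_simps)
    then show ?thesis by (metis abs_triangle_ineq abs_mult)
  qed
  have t2: "\<bar>I\<bar> * \<bar>N - S1\<bar> \<le> s * (N * \<alpha>)"
    using h1 I by (intro mult_mono) (auto simp: abs_minus_commute)
  have num: "\<bar>Sf - I * S1\<bar> \<le> 2 * N * s * \<alpha>" using t1 t2 h2 by (simp add: algebra_simps)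
  have "\<bar>Sf - I * S1\<bar> / S1 \<le> (2 * N * s * \<alpha>) / S1"
    using num S1p by (intro divide_right_mono) auto
  also have "\<dots> \<le> (2 * N * s * \<alpha>) / (N * (1 - \<alpha>))"
    using S1 N a s S1p by (intro divide_left_mono) auto
  also have "\<dots> = 2 * \<alpha> * s / (1 - \<alpha>)" using N a by (simp add: field_simps)
  finally show ?thesis using eq1 by simp
qed

lemma N_bound:
  fixes \<epsilon> c :: real and N :: nat
  assumes eps: "\<epsilon> \<ge> 0" and c: "c \<ge> 0"
    and N_def: "real N = 2 powr ((log 2 (exp 1) + 4 * c) * \<epsilon>)"
  shows "exp \<epsilon> \<le> real N * (sqrt (2 powr (- c * \<epsilon>) + 2 powr (- (c ^ 2) / log 2 (exp 1) + 1))) ^ 3"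
proof -
  define u where "u = 2 powr (- c * \<epsilon>)"
  define v where "v = 2 powr (- (c ^ 2) / log 2 (exp 1) + 1)"
  have u0: "u > 0" by (simp add: u_def)
  have g1: "1 \<le> 2 powr (c * \<epsilon>)" by (rule ge_one_powr_ge_zero) (use eps c in auto)
  have u1: "u \<le> 1" using g1 by (simp add: u_def powr_minus_divide)
  have v0: "v > 0" by (simp add: v_def)
  have "u * u \<le> u" using u0 u1 by (simp add: mult_left_le_one_le)
  then have "sqrt (u * u) \<le> sqrt u" by (rule real_sqrt_le_mono)
  then have "sqrt u \<ge> u" using u0 by simp
  also have "sqrt u \<le> sqrt (u + v)" using v0 by simp
  finally have ua: "u \<le> sqrt (u + v)" .
  have "u ^ 4 \<le> u ^ 3" using u0 u1 by (intro power_decreasing) auto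
  also have "u ^ 3 \<le> sqrt (u + v) ^ 3" using ua u0 by (intro power_mono) auto
  finally have u4: "u ^ 4 \<le> sqrt (u + v) ^ 3" .
  have N_eq: "real N = exp \<epsilon> * 2 powr (4 * c * \<epsilon>)"
  proof -
    have "real N = 2 powr (log 2 (exp 1) * \<epsilon>) * 2 powr (4 * c * \<epsilon>)"
      unfolding N_def by (simp add: powr_add[symmetric] algebra_simps)
    also have "2 powr (log 2 (exp 1) * \<epsilon>) = exp \<epsilon>"
      by (simp add: powr_powr[symmetric] powr_def)
    finally show ?thesis .
  qed
  have "2 powr (4 * c * \<epsilon>) * u ^ 4 = 1"
    unfolding u_def by (simp add: powr_realpow[symmetric] powr_powr powr_add[symmetric])
  then have "exp \<epsilon> = real N * u ^ 4" using N_eq by simp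
  also have "\<dots> \<le> real N * sqrt (u + v) ^ 3" using u4 by (intro mult_left_mono) auto
  finally show ?thesis by (simp add: u_def v_def)
qed

theorem theorem1:
  fixes X Z :: "'a::real_normed_vector set"
    and M :: "'a measure"
    and q :: "'a \<Rightarrow> 'a \<Rightarrow> real"
    and p :: "'a \<Rightarrow> real"
    and x :: 'a
    and \<epsilon> c :: real
    and N :: nat
  assumes M_sets: "sets M = sets (restrict_space borel Z)"
    and x_in: "x \<in> X"
    and eps_nonneg: "\<epsilon> \<ge> 0"
    and q_meas: "\<And>x'. x' \<in> X \<Longrightarrow> q x' \<in> borel_measurable M"
    and q_pos: "\<And>x' z. x' \<in> X \<Longrightarrow> z \<in> Z \<Longrightarrow> q x' z > 0"
    and q_dens: "\<And>x'. x' \<in> X \<Longrightarrow> (\<integral>\<^sup>+ z. ennreal (q x' z) \<partial>M) = 1"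
    and ldp: "eps_LDP \<epsilon> X Z q"
    and p_meas: "p \<in> borel_measurable M"
    and p_pos: "\<And>z. z \<in> Z \<Longrightarrow> p z > 0"
    and p_dens: "(\<integral>\<^sup>+ z. ennreal (p z) \<partial>M) = 1"
    and ratio: "\<And>x' z. x' \<in> X \<Longrightarrow> z \<in> Z \<Longrightarrow> \<bar>ln (q x' z / p z)\<bar> \<le> \<epsilon>"
    and fourth_moment: "integrable M (\<lambda>z. norm (z - x) ^ 4 * q x z)"
    and c_nonneg: "c \<ge> 0"
    and N_def: "real N = 2 powr ((log 2 (exp 1) + 4 * c) * \<epsilon>)"
  shows "let \<alpha> = sqrt (2 powr (- c * \<epsilon>) + 2 powr (- (c ^ 2) / log 2 (exp 1) + 1))
         in measure (candidates N M p)
              {zs \<in> space (candidates N M p).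
                 \<bar>mrc_expect N q p x zs (\<lambda>z. norm (z - x) ^ 2)
                   - mech_expect M q x (\<lambda>z. norm (z - x) ^ 2)\<bar>
                 \<le> 2 * \<alpha> * sqrt (mech_expect M q x (\<lambda>z. norm (z - x) ^ 4)) / (1 - \<alpha>)}
            \<ge> 1 - 2 * \<alpha>"
  proof -
  define \<alpha> where "\<alpha> = sqrt (2 powr (- c * \<epsilon>) + 2 powr (- (c ^ 2) / log 2 (exp 1) + 1))"
  let ?P = "density M (\<lambda>z. ennreal (p z))"
  let ?Q = "candidates N M p"
  define ff where "ff z = norm (z - x) ^ 2" for z
  define G where "G = {zs \<in> space ?Q.
                 \<bar>mrc_expect N q p x zs (\<lambda>z. norm (z - x) ^ 2)
                   - mech_expect M q x (\<lambda>z. norm (z - x) ^ 2)\<bar>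
                 \<le> 2 * \<alpha> * sqrt (mech_expect M q x (\<lambda>z. norm (z - x) ^ 4)) / (1 - \<alpha>)}"
  have Q_def: "?Q = PiM {..<N} (\<lambda>_. ?P)" by (simp add: candidates_def)
  have spM: "space M = Z"
    using sets_eq_imp_space_eq[OF M_sets] by (simp add: space_restrict_space)
  have Pprob: "prob_space ?P"
    using p_meas by (intro prob_spaceI, subst emeasure_density) (auto simp: p_dens nn_integral_cong[of _ "\<lambda>z. ennreal (p z) * indicator (space M) z" "\<lambda>z. ennreal (p z)"])
  interpret Q: prob_space ?Q unfolding Q_def by (rule prob_space_PiM) (simp add: Pprob)
  have main: "measure ?Q G \<ge> 1 - 2 * \<alpha>"
  proof (cases "\<alpha> \<ge> 1 / 2")
    case True
    then show ?thesis using measure_nonneg[of ?Q G] by linarith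
  next
    case False
    then have a1: "\<alpha> < 1 / 2" by simp
    have a0: "\<alpha> > 0" unfolding \<alpha>_def by (intro real_sqrt_gt_zero add_pos_pos) auto
    have Npos: "N > 0"
    proof -
      have "real N > 0" unfolding N_def by simp
      then show ?thesis by simp
    qed
    have NK: "exp \<epsilon> \<le> real N * \<alpha> ^ 3" unfolding \<alpha>_def by (rule N_bound[OF eps_nonneg c_nonneg N_def])
    have qm[measurable]: "q x \<in> borel_measurable M" using q_meas[OF x_in] .
    note pm[measurable] = p_meas
    have qpos': "\<And>z. z \<in> space M \<Longrightarrow> q x z > 0" using q_pos[OF x_in] spM by simp
    have ppos': "\<And>z. z \<in> space M \<Longrightarrow> p z > 0" using p_pos spM by simp
    have rho: "q x z / p z \<le> exp \<epsilon>" if z: "z \<in> space M" for z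
    proof -
      have "ln (q x z / p z) \<le> \<epsilon>" using ratio[OF x_in, of z] z spM by simp
      then have "exp (ln (q x z / p z)) \<le> exp \<epsilon>" by simp
      then show ?thesis using qpos'[OF z] ppos'[OF z] by simp
    qed
    have qd: "(\<integral>\<^sup>+ z. ennreal (q x z) \<partial>M) = 1" using q_dens[OF x_in] .
    have qi: "integrable M (q x)"
      by (rule integrableI_nn_integral_finite[OF qm _ qd[unfolded ennreal_1[symmetric]]])
         (use qpos' in \<open>auto intro!: AE_I2 less_imp_le\<close>)
    have qint: "integral\<^sup>L M (q x) = 1"
      by (subst integral_eq_nn_integral) (use qpos' qd in \<open>auto intro!: AE_I2 less_imp_le\<close>)
    have ffb: "ff \<in> borel_measurable borel" unfolding ff_def
      by (intro borel_measurable_continuous_onI continuous_intros)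
    have ffm[measurable]: "ff \<in> borel_measurable M"
    proof -
      have e: "(borel_measurable M :: ('a \<Rightarrow> real) set) = borel_measurable (restrict_space borel Z)"
        by (rule measurable_cong_sets[OF M_sets refl])
      show ?thesis unfolding e by (rule measurable_restrict_space1[OF ffb])
    qed
    have one_m: "(\<lambda>z. 1::real) \<in> borel_measurable M" by simp
    have f1i: "integrable M (\<lambda>z. (1::real)\<^sup>2 * q x z)" using qi by simp
    have ff4: "(ff z)\<^sup>2 = norm (z - x) ^ 4" for z
      unfolding ff_def by (simp add: power_mult[symmetric])
    have ffi: "integrable M (\<lambda>z. (ff z)\<^sup>2 * q x z)" using fourth_moment by (simp add: ff4)
    note D1 = dens_facts[OF qm pm one_m qpos' ppos' rho qd p_dens f1i]
    note D2 = dens_facts[OF qm pm ffm qpos' ppos' rho qd p_dens ffi]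
    define I where "I = (\<integral>z. ff z * q x z \<partial>M)"
    define s where "s = sqrt (\<integral>z. (ff z)\<^sup>2 * q x z \<partial>M)"
    have s0: "s \<ge> 0" unfolding s_def
      by (intro real_sqrt_ge_zero integral_nonneg_AE AE_I2) (use qpos' in \<open>simp add: less_imp_le\<close>)
    have Is: "\<bar>I\<bar> \<le> s" unfolding s_def I_def using D2(6) real_sqrt_le_mono by fastforce
    define Y1 where "Y1 = (\<lambda>z. 1 * (q x z / p z) - (\<integral>z. 1 * q x z \<partial>M))"
    define Yf where "Yf = (\<lambda>z. ff z * (q x z / p z) - I)"
    have B1: "measure (PiM {..<N} (\<lambda>_. ?P)) {zs \<in> space (PiM {..<N} (\<lambda>_. ?P)). (\<Sum>k<N. Y1 (zs k))\<^sup>2 > (real N * 1 * \<alpha>)\<^sup>2} \<le> \<alpha>"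
      unfolding Y1_def
      by (rule bad_bound[OF D1(1) D1(2) D1(3) D1(4) _ _ NK a0 Npos]) (use D1(5) qint in simp_all)
    have B2: "measure (PiM {..<N} (\<lambda>_. ?P)) {zs \<in> space (PiM {..<N} (\<lambda>_. ?P)). (\<Sum>k<N. Yf (zs k))\<^sup>2 > (real N * s * \<alpha>)\<^sup>2} \<le> \<alpha>"
      unfolding Yf_def I_def
      by (rule bad_bound[OF D2(1) D2(2) D2(3) D2(4) s0 _ NK a0 Npos]) (use D2(5) s0 in \<open>simp_all add: s_def mult.commute\<close>)
    define B1s where "B1s = {zs \<in> space ?Q. (\<Sum>k<N. Y1 (zs k))\<^sup>2 > (real N * 1 * \<alpha>)\<^sup>2}"
    define B2s where "B2s = {zs \<in> space ?Q. (\<Sum>k<N. Yf (zs k))\<^sup>2 > (real N * s * \<alpha>)\<^sup>2}"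
    have mB1: "measure ?Q B1s \<le> \<alpha>" using B1 unfolding B1s_def Q_def .
    have mB2: "measure ?Q B2s \<le> \<alpha>" using B2 unfolding B2s_def Q_def .
    have sub: "space ?Q - G \<subseteq> B1s \<union> B2s"
    proof
      fix zs assume zs: "zs \<in> space ?Q - G"
      show "zs \<in> B1s \<union> B2s"
      proof (rule ccontr)
        assume nb: "zs \<notin> B1s \<union> B2s"
        have zsp: "zs \<in> space ?Q" using zs by simp
        have zk: "zs k \<in> space M" if "k < N" for k
          using zsp that unfolding Q_def by (auto simp: space_PiM)
        define W where "W k = q x (zs k) / p (zs k)" for k
        define S1 where "S1 = (\<Sum>k<N. W k)"
        define Sf where "Sf = (\<Sum>k<N. W k * ff (zs k))"
        have e1: "(\<Sum>k<N. Y1 (zs k)) = S1 - real N"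
          by (simp add: Y1_def qint S1_def W_def sum_subtractf)
        have e2: "(\<Sum>k<N. Yf (zs k)) = Sf - real N * I"
          by (simp add: Yf_def Sf_def W_def sum_subtractf mult.commute)
        have h1: "(S1 - real N)\<^sup>2 \<le> (real N * \<alpha>)\<^sup>2" using nb zsp e1 by (auto simp: B1s_def)
        have h2: "(Sf - real N * I)\<^sup>2 \<le> (real N * s * \<alpha>)\<^sup>2" using nb zsp e2 by (auto simp: B2s_def)
        have Npos': "real N > 0" using Npos by simp
        have h1': "\<bar>S1 - real N\<bar> \<le> real N * \<alpha>"
          using h1 a0 Npos' by (subst power2_le_iff_abs_le[symmetric]) auto
        have h2': "\<bar>Sf - real N * I\<bar> \<le> real N * s * \<alpha>"
          using h2 a0 Npos' s0 by (subst power2_le_iff_abs_le[symmetric]) auto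
        have fin: "\<bar>Sf / S1 - I\<bar> \<le> 2 * \<alpha> * s / (1 - \<alpha>)"
          by (rule final_ineq[OF Npos' _ _ s0 Is h1' h2']) (use a0 a1 in auto)
        have me: "mrc_expect N q p x zs (\<lambda>z. norm (z - x) ^ 2) = Sf / S1"
          by (simp add: mrc_expect_def mrc_pi_def mrc_weight_def Sf_def S1_def W_def ff_def
              sum_divide_distrib)
        have m2: "mech_expect M q x (\<lambda>z. norm (z - x) ^ 2) = I"
          by (simp add: mech_expect_def I_def ff_def)
        have m4: "sqrt (mech_expect M q x (\<lambda>z. norm (z - x) ^ 4)) = s"
          by (simp add: mech_expect_def s_def ff4)
        have "zs \<in> G" unfolding G_def using zsp fin me m2 m4 by simp
        then show False using zs by simp
      qed
    qed
    have qmP[measurable]: "q x \<in> borel_measurable ?P" by simp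
    have pmP[measurable]: "p \<in> borel_measurable ?P" by simp
    have ffP[measurable]: "ff \<in> borel_measurable ?P" by simp
    have Gm: "G \<in> sets ?Q" unfolding G_def Q_def mrc_expect_def mrc_pi_def mrc_weight_def ff_def[symmetric]
      by measurable
    have B1m: "B1s \<in> sets ?Q" unfolding B1s_def Q_def Y1_def by measurable
    have B2m: "B2s \<in> sets ?Q" unfolding B2s_def Q_def Yf_def by measurable
    have "measure ?Q (space ?Q - G) \<le> measure ?Q (B1s \<union> B2s)"
      by (rule Q.finite_measure_mono[OF sub]) (use B1m B2m in auto)
    also have "\<dots> \<le> measure ?Q B1s + measure ?Q B2s"
      by (rule measure_Un_le[OF B1m B2m])
    finally have "measure ?Q (space ?Q - G) \<le> 2 * \<alpha>" using mB1 mB2 by simp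
    then show ?thesis using Q.prob_compl[OF Gm] by simp
  qed
  show ?thesis unfolding Let_def using main unfolding \<alpha>_def G_def .
qed

end
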